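(* Let $p>0$, let $u$ be a weight on $\mathbb R$ satisfying the doubling property $u(2I)\le Cu(I)$ for all intervals $I$, and let $w$ be a weight on $(0,\infty)$ with $w\in\Delta_2$. Then there is a constant $C'>0$ such that for every well-separated finite family of intervals $\{I_i\}_i$ and every choice of integers $j_i\in[-50,50]$, $$\frac1{C'}W^{1/p}\Big(u\big(\textstyle\bigcup_iI_{i,j_i}\big)\Big)\le W^{1/p}\Big(u\big(\textstyle\bigcup_iI_i\big)\Big)\le C'\,W^{1/p}\Big(u\big(\textstyle\bigcup_iI_{i,j_i}\big)\Big).$$
   Context: A weight $u$ on $\mathbb R$ is locally integrable with $u>0$ a.e.; $u(E)=\int_Eu$; $2I$ is the interval with the same center as $I$ and twice the length. A weight $w$ on $(0,\infty)$ is nonnegative locally integrable, $W(t)=\int_0^tw$; $w\in\Delta_2$ means $W(2r)\le CW(r)$ for all $r>0$. For an interval $I$ and an integer $j\in[-50,50]$, $I_{j}$ denotes the interval with $|I_j|=|I|$, $I_0=I$, and for $j\ne0$, $\mathrm{dist}(I_j,I)=(|j|-1)|I|$ with $I_j$ to the left of $I$ if $j<0$ and to the right if $j>0$; thus $101I=\bigcup_{j=-50}^{50}I_j$, where $101I$ is the interval with the same center as $I$ and $101$ times the length. For a family $\{I_i\}$, $I_{i,j}$ denotes $(I_i)_j$. A finite family of intervals $\{I_i\}$ is well-separated if the intervals $101I_i$ are pairwise disjoint. *)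

theory Defs
  imports "HOL-Analysis.Analysis"
begin

definition ivl :: "real \<times> real \<Rightarrow> real set" where
  "ivl I = {fst I .. snd I}"

definition dilate :: "real \<Rightarrow> real \<times> real \<Rightarrow> real \<times> real" where
  "dilate k I = (let c = (fst I + snd I) / 2; h = (snd I - fst I) / 2
                 in (c - k * h, c + k * h))"

text \<open>I_j: translate I by j times its length.\<close>
definition shift_ivl :: "real \<times> real \<Rightarrow> int \<Rightarrow> real \<times> real" where
  "shift_ivl I j = (fst I + of_int j * (snd I - fst I), snd I + of_int j * (snd I - fst I))"

definition weight_R :: "(real \<Rightarrow> real) \<Rightarrow> bool" where
  "weight_R u \<longleftrightarrow> (\<forall>a b. set_integrable lborel {a..b} u) \<and> (AE x in lborel. u x > 0)"

definition umeas :: "(real \<Rightarrow> real) \<Rightarrow> real set \<Rightarrow> real" where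
  "umeas u E = (LINT x:E|lborel. u x)"

text \<open>A weight on (0,infinity): nonnegative, integrable on (0,t] for every t>0 (so W is finite).\<close>
definition weight_pos :: "(real \<Rightarrow> real) \<Rightarrow> bool" where
  "weight_pos w \<longleftrightarrow> (\<forall>x>0. w x \<ge> 0) \<and> (\<forall>t>0. set_integrable lborel {0<..t} w)"

definition Wfun :: "(real \<Rightarrow> real) \<Rightarrow> real \<Rightarrow> real" where
  "Wfun w t = (LINT x:{0<..t}|lborel. w x)"

definition Delta2 :: "(real \<Rightarrow> real) \<Rightarrow> bool" where
  "Delta2 w \<longleftrightarrow> (\<exists>C. \<forall>r>0. Wfun w (2 * r) \<le> C * Wfun w r)"

definition doubling :: "(real \<Rightarrow> real) \<Rightarrow> bool" where
  "doubling u \<longleftrightarrow> (\<exists>C. \<forall>a b. a < b \<longrightarrow> umeas u (ivl (dilate 2 (a, b))) \<le> C * umeas u (ivl (a, b)))"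

definition well_separated :: "'i set \<Rightarrow> ('i \<Rightarrow> real \<times> real) \<Rightarrow> bool" where
  "well_separated S I \<longleftrightarrow> finite S \<and>
     (\<forall>i\<in>S. \<forall>k\<in>S. i \<noteq> k \<longrightarrow> ivl (dilate 101 (I i)) \<inter> ivl (dilate 101 (I k)) = {})"

end

theory Submission
  imports Defs
begin

lemma set_int_sub:
  assumes "weight_R u" "E \<subseteq> {a..b}" "E \<in> sets lborel"
  shows "set_integrable lborel E u"
  using assms set_integrable_subset unfolding weight_R_def by blast

lemma umeas_nonneg: "weight_R u \<Longrightarrow> 0 \<le> umeas u E"
  unfolding umeas_def set_lebesgue_integral_def weight_R_def
  by (rule integral_nonneg_AE) (auto elim!: eventually_mono simp: indicator_def)

lemma umeas_mono:
  assumes "weight_R u" "E \<subseteq> F" "F \<subseteq> {a..b}" "E \<in> sets lborel" "F \<in> sets lborel"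
  shows "umeas u E \<le> umeas u F"
proof -
  have iE: "integrable lborel (\<lambda>x. indicator E x *\<^sub>R u x)"
    using set_int_sub[OF assms(1) _ assms(4)] assms(2,3) unfolding set_integrable_def by blast
  have iF: "integrable lborel (\<lambda>x. indicator F x *\<^sub>R u x)"
    using set_int_sub[OF assms(1) assms(3) assms(5)] unfolding set_integrable_def by blast
  have "AE x in lborel. u x > 0" using assms(1) unfolding weight_R_def by blast
  then have "AE x in lborel. indicator E x *\<^sub>R u x \<le> indicator F x *\<^sub>R u x"
    by (rule eventually_mono) (use assms(2) in \<open>auto simp: indicator_def\<close>)
  then show ?thesis unfolding umeas_def set_lebesgue_integral_def
    by (rule integral_mono_AE[OF iE iF])
qed

lemma umeas_sum:
  assumes "weight_R u" "finite S" "disjoint_family_on E S"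
    "\<And>i. i \<in> S \<Longrightarrow> \<exists>a b. E i \<subseteq> {a..b} \<and> E i \<in> sets lborel"
  shows "umeas u (\<Union>i\<in>S. E i) = (\<Sum>i\<in>S. umeas u (E i))"
proof -
  have "umeas u (\<Union>i\<in>S. E i) = integral\<^sup>L lborel (\<lambda>x. \<Sum>i\<in>S. indicator (E i) x *\<^sub>R u x)"
    unfolding umeas_def set_lebesgue_integral_def
    by (simp add: indicator_UN_disjoint[OF assms(2,3)] sum_distrib_right)
  also have "\<dots> = (\<Sum>i\<in>S. umeas u (E i))"
    unfolding umeas_def set_lebesgue_integral_def
  proof (rule Bochner_Integration.integral_sum[where f="\<lambda>i x. indicator (E i) x *\<^sub>R u x"])
    fix i assume "i \<in> S"
    then show "integrable lborel (\<lambda>x. indicator (E i) x *\<^sub>R u x)"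
      using assms(4) set_int_sub[OF assms(1)] unfolding set_integrable_def by blast
  qed
  finally show ?thesis .
qed

lemma dilate_2: "dilate 2 (dilate k I) = dilate (2 * k) I"
  by (simp add: dilate_def Let_def field_simps)

lemma dilate_lt: "fst I < snd I \<Longrightarrow> k > 0 \<Longrightarrow> fst (dilate k I) < snd (dilate k I)"
  by (simp add: dilate_def Let_def)

lemma doubling_iter:
  assumes "weight_R u" "\<forall>a b. a < b \<longrightarrow> umeas u (ivl (dilate 2 (a, b))) \<le> D * umeas u (ivl (a, b))"
    "D \<ge> 0" "fst I < snd I"
  shows "umeas u (ivl (dilate (2^k) I)) \<le> D^k * umeas u (ivl I)"
proof (induction k)
  case 0
  have "dilate 1 I = I" by (cases I) (simp add: dilate_def Let_def field_simps)
  then show ?case by simp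
next
  case (Suc k)
  obtain a b where ab: "dilate (2^k) I = (a,b)" by fastforce
  have "a < b" using dilate_lt[OF assms(4), of "2^k"] ab by simp
  have "umeas u (ivl (dilate (2^Suc k) I)) = umeas u (ivl (dilate 2 (a,b)))"
    using ab dilate_2[of "2^k" I] by simp
  also have "\<dots> \<le> D * umeas u (ivl (a,b))" using assms(2) \<open>a<b\<close> by blast
  also have "\<dots> \<le> D * (D^k * umeas u (ivl I))"
    using Suc ab assms(3) by (simp add: mult_left_mono)
  finally show ?case by simp
qed

lemma shift_sub1:
  assumes "fst I < snd I" "-50 \<le> j" "j \<le> 50"
  shows "ivl (shift_ivl I j) \<subseteq> ivl (dilate (2^8) I)"
proof -
  obtain a b where I: "I = (a,b)" by fastforce
  have L: "b - a > 0" using assms I by simp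
  define t where "t = of_int j * (b - a)"
  have "t \<ge> -50 * (b-a)" using assms(2) L unfolding t_def
    by (intro mult_right_mono) auto
  moreover have "t \<le> 50 * (b-a)" using assms(3) L unfolding t_def
    by (intro mult_right_mono) auto
  moreover have "shift_ivl I j = (a + t, b + t)" unfolding I shift_ivl_def t_def by simp
  ultimately show ?thesis using L unfolding I ivl_def dilate_def Let_def
    by (auto simp: field_simps)
qed

lemma shift_sub2:
  assumes "fst I < snd I" "-50 \<le> j" "j \<le> 50"
  shows "ivl I \<subseteq> ivl (dilate (2^8) (shift_ivl I j))"
proof -
  obtain a b where I: "I = (a,b)" by fastforce
  have L: "b - a > 0" using assms I by simp
  define t where "t = of_int j * (b - a)"
  have "t \<ge> -50 * (b-a)" using assms(2) L unfolding t_def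
    by (intro mult_right_mono) auto
  moreover have "t \<le> 50 * (b-a)" using assms(3) L unfolding t_def
    by (intro mult_right_mono) auto
  moreover have "shift_ivl I j = (a + t, b + t)" unfolding I shift_ivl_def t_def by simp
  ultimately show ?thesis using L unfolding I ivl_def dilate_def Let_def
    by (auto simp: field_simps)
qed

lemma shift_sub3:
  assumes "fst I < snd I" "-50 \<le> j" "j \<le> 50"
  shows "ivl (shift_ivl I j) \<subseteq> ivl (dilate 101 I)"
proof -
  obtain a b where I: "I = (a,b)" by fastforce
  have L: "b - a > 0" using assms I by simp
  define t where "t = of_int j * (b - a)"
  have "t \<ge> -50 * (b-a)" using assms(2) L unfolding t_def
    by (intro mult_right_mono) auto
  moreover have "t \<le> 50 * (b-a)" using assms(3) L unfolding t_def
    by (intro mult_right_mono) auto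
  moreover have "shift_ivl I j = (a + t, b + t)" unfolding I shift_ivl_def t_def by simp
  ultimately show ?thesis using L unfolding I ivl_def dilate_def Let_def
    by (auto simp: field_simps)
qed

lemma sub4: "fst I < snd I \<Longrightarrow> ivl I \<subseteq> ivl (dilate 101 I)"
  by (cases I) (auto simp: ivl_def dilate_def Let_def field_simps)

lemma shift_lt: "fst I < snd I \<Longrightarrow> fst (shift_ivl I j) < snd (shift_ivl I j)"
  by (simp add: shift_ivl_def)

lemma W_nonneg: "weight_pos w \<Longrightarrow> 0 \<le> Wfun w t"
  unfolding Wfun_def set_lebesgue_integral_def weight_pos_def
  by (rule integral_nonneg_AE) (auto simp: indicator_def)

lemma W_zero: "Wfun w 0 = 0"
  unfolding Wfun_def set_lebesgue_integral_def by simp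

lemma W_mono:
  assumes "weight_pos w" "0 \<le> s" "s \<le> t"
  shows "Wfun w s \<le> Wfun w t"
proof (cases "s = 0")
  case True then show ?thesis using W_nonneg[OF assms(1)] W_zero by simp
next
  case False
  then have "s > 0" "t > 0" using assms by auto
  then have i: "integrable lborel (\<lambda>x. indicator {0<..s} x *\<^sub>R w x)"
    "integrable lborel (\<lambda>x. indicator {0<..t} x *\<^sub>R w x)"
    using assms(1) unfolding weight_pos_def set_integrable_def by auto
  show ?thesis unfolding Wfun_def set_lebesgue_integral_def
    by (rule integral_mono[OF i]) (use assms in \<open>auto simp: indicator_def weight_pos_def\<close>)
qed

lemma W_iter:
  assumes "weight_pos w" "\<forall>r>0. Wfun w (2 * r) \<le> E * Wfun w r" "r \<ge> 0" "E \<ge> 0"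
  shows "Wfun w (2^m * r) \<le> E^m * Wfun w r"
proof (cases "r = 0")
  case True then show ?thesis using W_zero by simp
next
  case False
  then have r: "r > 0" using assms by simp
  show ?thesis
  proof (induction m)
    case 0 then show ?case by simp
  next
    case (Suc m)
    have "Wfun w (2^Suc m * r) = Wfun w (2 * (2^m * r))" by (simp add: mult.assoc)
    also have "\<dots> \<le> E * Wfun w (2^m * r)" using assms(2) r by simp
    also have "\<dots> \<le> E * (E^m * Wfun w r)"
      using Suc assms(4) by (simp add: mult_left_mono)
    finally show ?case by simp
  qed
qed

lemma W_fin:
  assumes "weight_pos w" "\<forall>r>0. Wfun w (2 * r) \<le> E * Wfun w r" "E \<ge> 1" "p > 0"
    "0 \<le> A" "A \<le> 2^m * B" "0 \<le> B"
  shows "Wfun w A powr (1/p) \<le> (E^m) powr (1/p) * Wfun w B powr (1/p)"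
proof -
  have "Wfun w A \<le> Wfun w (2^m * B)" using W_mono[OF assms(1) assms(5,6)] .
  also have "\<dots> \<le> E^m * Wfun w B" using W_iter[OF assms(1,2,7)] assms(3) by simp
  finally have "Wfun w A powr (1/p) \<le> (E^m * Wfun w B) powr (1/p)"
    using assms(4) W_nonneg[OF assms(1)] by (intro powr_mono2) auto
  also have "\<dots> = (E^m) powr (1/p) * Wfun w B powr (1/p)"
    using assms(3) W_nonneg[OF assms(1)] by (simp add: powr_mult)
  finally show ?thesis .
qed

lemma ivl_meas: "ivl X \<in> sets lborel" "ivl X \<subseteq> {fst X..snd X}"
  by (auto simp: ivl_def)

theorem lemma3p7:
  fixes p :: real and u w :: "real \<Rightarrow> real"
  assumes "p > 0" and "weight_R u" and "doubling u"
    and "weight_pos w" and "Delta2 w"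
  shows "\<exists>C'>0. \<forall>(S :: nat set) (I :: nat \<Rightarrow> real \<times> real) (j :: nat \<Rightarrow> int).
      (\<forall>i\<in>S. fst (I i) < snd (I i)) \<and> well_separated S I \<and> (\<forall>i\<in>S. -50 \<le> j i \<and> j i \<le> 50) \<longrightarrow>
        (1 / C') * Wfun w (umeas u (\<Union>i\<in>S. ivl (shift_ivl (I i) (j i)))) powr (1 / p)
          \<le> Wfun w (umeas u (\<Union>i\<in>S. ivl (I i))) powr (1 / p)
      \<and> Wfun w (umeas u (\<Union>i\<in>S. ivl (I i))) powr (1 / p)
          \<le> C' * Wfun w (umeas u (\<Union>i\<in>S. ivl (shift_ivl (I i) (j i)))) powr (1 / p)"
proof -
  obtain Cd where Cd: "\<forall>a b. a < b \<longrightarrow> umeas u (ivl (dilate 2 (a, b))) \<le> Cd * umeas u (ivl (a, b))"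
    using assms(3) unfolding doubling_def by blast
  define D where "D = max Cd 1"
  have D1: "D \<ge> 1" unfolding D_def by simp
  have hD: "\<forall>a b. a < b \<longrightarrow> umeas u (ivl (dilate 2 (a, b))) \<le> D * umeas u (ivl (a, b))"
  proof (intro allI impI)
    fix a b :: real assume "a < b"
    have "Cd * umeas u (ivl (a, b)) \<le> D * umeas u (ivl (a, b))"
      unfolding D_def using umeas_nonneg[OF assms(2)] by (intro mult_right_mono) auto
    then show "umeas u (ivl (dilate 2 (a, b))) \<le> D * umeas u (ivl (a, b))"
      using Cd \<open>a < b\<close> by fastforce
  qed
  obtain Cw where Cw: "\<forall>r>0. Wfun w (2 * r) \<le> Cw * Wfun w r"
    using assms(5) unfolding Delta2_def by blast
  define E where "E = max Cw 1"
  have E1: "E \<ge> 1" unfolding E_def by simp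
  have hE: "\<forall>r>0. Wfun w (2 * r) \<le> E * Wfun w r"
  proof (intro allI impI)
    fix r :: real assume "r > 0"
    have "Cw * Wfun w r \<le> E * Wfun w r"
      unfolding E_def using W_nonneg[OF assms(4)] by (intro mult_right_mono) auto
    then show "Wfun w (2 * r) \<le> E * Wfun w r" using Cw \<open>r > 0\<close> by fastforce
  qed
  obtain m where m: "D^8 < 2^m" using real_arch_pow[of "2::real" "D^8"] by auto
  define C' where "C' = (E^m) powr (1/p)"
  have C'pos: "C' > 0" unfolding C'_def using E1 by simp
  have comp: "umeas u (ivl J) \<le> 2^m * umeas u (ivl K)"
    if "ivl J \<subseteq> ivl (dilate (2^8) K)" "fst K < snd K" for J K
  proof -
    have "umeas u (ivl J) \<le> umeas u (ivl (dilate (2^8) K))"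
      using umeas_mono[OF assms(2) that(1) ivl_meas(2) ivl_meas(1) ivl_meas(1)] .
    also have "\<dots> \<le> D^8 * umeas u (ivl K)"
      using doubling_iter[OF assms(2) hD _ that(2), where k=8] D1 by simp
    also have "\<dots> \<le> 2^m * umeas u (ivl K)"
      using m umeas_nonneg[OF assms(2)] by (intro mult_right_mono) auto
    finally show ?thesis .
  qed
  show ?thesis
  proof (intro exI[of _ C'] conjI C'pos allI impI)
    fix S :: "nat set" and I :: "nat \<Rightarrow> real \<times> real" and j :: "nat \<Rightarrow> int"
    assume H: "(\<forall>i\<in>S. fst (I i) < snd (I i)) \<and> well_separated S I \<and> (\<forall>i\<in>S. -50 \<le> j i \<and> j i \<le> 50)"
    have fin: "finite S" and sep: "\<forall>i\<in>S. \<forall>k\<in>S. i \<noteq> k \<longrightarrow> ivl (dilate 101 (I i)) \<inter> ivl (dilate 101 (I k)) = {}"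
      using H unfolding well_separated_def by auto
    have lt: "\<And>i. i \<in> S \<Longrightarrow> fst (I i) < snd (I i)" and jb: "\<And>i. i \<in> S \<Longrightarrow> -50 \<le> j i \<and> j i \<le> 50"
      using H by auto
    have dJ: "disjoint_family_on (\<lambda>i. ivl (shift_ivl (I i) (j i))) S"
      unfolding disjoint_family_on_def
    proof (intro ballI impI)
      fix i k assume "i \<in> S" "k \<in> S" "i \<noteq> k"
      then show "ivl (shift_ivl (I i) (j i)) \<inter> ivl (shift_ivl (I k) (j k)) = {}"
        using sep shift_sub3[OF lt jb[THEN conjunct1] jb[THEN conjunct2]] by blast
    qed
    have dI: "disjoint_family_on (\<lambda>i. ivl (I i)) S"
      unfolding disjoint_family_on_def
    proof (intro ballI impI)
      fix i k assume "i \<in> S" "k \<in> S" "i \<noteq> k"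
      then show "ivl (I i) \<inter> ivl (I k) = {}"
        using sep sub4[OF lt] by blast
    qed
    define A where "A = umeas u (\<Union>i\<in>S. ivl (shift_ivl (I i) (j i)))"
    define B where "B = umeas u (\<Union>i\<in>S. ivl (I i))"
    have A: "A = (\<Sum>i\<in>S. umeas u (ivl (shift_ivl (I i) (j i))))"
      unfolding A_def by (rule umeas_sum[OF assms(2) fin dJ]) (use ivl_meas in blast)
    have B: "B = (\<Sum>i\<in>S. umeas u (ivl (I i)))"
      unfolding B_def by (rule umeas_sum[OF assms(2) fin dI]) (use ivl_meas in blast)
    have A0: "0 \<le> A" and B0: "0 \<le> B" unfolding A_def B_def using umeas_nonneg[OF assms(2)] by auto
    have AB: "A \<le> 2^m * B" unfolding A B sum_distrib_left
      by (intro sum_mono comp shift_sub1 lt) (use jb in auto)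
    have BA: "B \<le> 2^m * A" unfolding A B sum_distrib_left
      by (intro sum_mono comp shift_sub2 lt shift_lt) (use jb in auto)
    have 1: "Wfun w A powr (1/p) \<le> C' * Wfun w B powr (1/p)"
      unfolding C'_def by (rule W_fin[OF assms(4) hE E1 assms(1) A0 AB B0])
    have 2: "Wfun w B powr (1/p) \<le> C' * Wfun w A powr (1/p)"
      unfolding C'_def by (rule W_fin[OF assms(4) hE E1 assms(1) B0 BA A0])
    show "1 / C' * Wfun w A powr (1 / p) \<le> Wfun w B powr (1 / p)"
      using 1 C'pos by (simp add: divide_le_eq mult.commute)
    show "Wfun w B powr (1 / p) \<le> C' * Wfun w A powr (1 / p)" using 2 .
  qed
qed

end
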